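(* Let $(D,D_{t'})$ be a proper pair (in the sense allowing contemporaneous effects) and let $A,C\subseteq V\cup W$ and $B\subseteq V$ be pairwise disjoint. Assume there are no tailed directed edges into $B$ in $D$. If $B$ is $\delta$-separated from $A$ given $C$ in $D$, then for every $0<t\le t'$, $\nu_t^B$ is $d$-separated from $\bar\nu_{t-1}^A$ given $\bar\nu_{t-1}^{B\cup C}$ in $D_{t'}$.
   Context: $V$, $W$ are finite disjoint sets ($W$ = baseline nodes). Tailed directed graph: graph on $V\cup W$ with directed edges $i\to j$ and tailed directed edges $i\bullet\!\!\to j$; $i\ast\!\!\to j$ means either. Only baseline nodes have edges into baseline nodes, and these are tailed. $D^-$ is the DG with $i\to j$ iff $i\ast\!\!\to j$ in $D$. DG terminology: path = walk without repeated nodes; collider = non-endpoint node with both adjacent edges pointing into it; $\mathrm{an}(C)$ = nodes with a directed path into $C$. $\delta$-separation in a DG $G$: with $G^B$ obtained by deleting all edges $i\to j$ with $i\in B$, $B$ is $\delta$-separated from $A$ given $C$ if every path in $G^B$ between $A$ and $B$ contains a noncollider in $C$ or a collider not in $\mathrm{an}_G(C)\cup C$; in a tailed directed graph $D$ this is applied to $D^-$. $d$-separation in a DAG: same blocking condition on paths of the DAG with no edge deletion. Unrolling: the unrolled version of $D$ on $t'$ lags is the DAG $D_{t'}$ on nodes $\bigcup_{i\in V}\{\nu_0^i,\dots,\nu_{t'}^i\}\cup\{\nu_0^i:i\in W\}$ with $\nu_s^i\to\nu_t^j$ if $s<t$ and $i\ast\!\!\to j$, and $\nu_t^i\to\nu_t^j$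 if $i\bullet\!\!\to j$. Rolling: the rolled version of a DAG $D_{t'}$ on such a node set has $i\ast\!\!\to j$ if $\nu_s^i\to\nu_t^j$ for some $s\le t$, and $i\bullet\!\!\to j$ iff $\nu_t^i\to\nu_t^j$ for some $t$. Standing assumption: if $\nu_t^i\to\nu_t^j$ is present then so is $\nu_s^i\to\nu_u^j$ for some $s<u$. $(D,D_{t'})$ is proper if $D$ is the rolled version of $D_{t'}$ or $D_{t'}$ is the unrolled version of $D$. $\nu_t^A=\{\nu_t^i:i\in A\}$, $\bar\nu_t^A=\{\nu_s^i:i\in A,s\le t\}$. *)

theory Defs
  imports Main
begin

text \<open>A tailed directed graph on V \<union> W (W = baseline nodes) is given by two edge
relations: Ed i j means i \<rightarrow> j, Et i j means the tailed edge i \<bullet>\<rightarrow> j.\<close>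

definition tailed_dg :: "'a set \<Rightarrow> 'a set \<Rightarrow> ('a \<Rightarrow> 'a \<Rightarrow> bool) \<Rightarrow> ('a \<Rightarrow> 'a \<Rightarrow> bool) \<Rightarrow> bool" where
  "tailed_dg V W Ed Et \<longleftrightarrow>
     finite V \<and> finite W \<and> V \<inter> W = {} \<and>
     (\<forall>i j. (Ed i j \<or> Et i j) \<longrightarrow> i \<in> V \<union> W \<and> j \<in> V \<union> W) \<and>
     (\<forall>i j. \<not> (Ed i j \<and> Et i j)) \<and>
     (\<forall>i j. j \<in> W \<and> (Ed i j \<or> Et i j) \<longrightarrow> i \<in> W \<and> Et i j)"

definition minus_graph :: "('a \<Rightarrow> 'a \<Rightarrow> bool) \<Rightarrow> ('a \<Rightarrow> 'a \<Rightarrow> bool) \<Rightarrow> 'a \<Rightarrow> 'a \<Rightarrow> bool" where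
  "minus_graph Ed Et = (\<lambda>i j. Ed i j \<or> Et i j)"

text \<open>A path is given by its node list xs (pairwise distinct) and the orientations ds
of its edges: ds!k = True means the k-th edge is xs!k \<rightarrow> xs!(k+1), False means
xs!(k+1) \<rightarrow> xs!k.\<close>

definition is_path :: "('b \<Rightarrow> 'b \<Rightarrow> bool) \<Rightarrow> 'b list \<Rightarrow> bool list \<Rightarrow> bool" where
  "is_path E xs ds \<longleftrightarrow> xs \<noteq> [] \<and> length ds = length xs - 1 \<and> distinct xs \<and>
     (\<forall>k < length ds. if ds ! k then E (xs ! k) (xs ! Suc k) else E (xs ! Suc k) (xs ! k))"

text \<open>Non-endpoint node xs!k (0 < k < length xs - 1) is a collider iff both adjacent
edges point into it.\<close>
definition is_collider :: "bool list \<Rightarrow> nat \<Rightarrow> bool" where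
  "is_collider ds k \<longleftrightarrow> ds ! (k - 1) \<and> \<not> ds ! k"

definition ancestors :: "('b \<Rightarrow> 'b \<Rightarrow> bool) \<Rightarrow> 'b set \<Rightarrow> 'b set" where
  "ancestors E C = {x. \<exists>y\<in>C. (x, y) \<in> {(u, v). E u v}\<^sup>*}"

definition blocked :: "('b \<Rightarrow> 'b \<Rightarrow> bool) \<Rightarrow> 'b set \<Rightarrow> 'b list \<Rightarrow> bool list \<Rightarrow> bool" where
  "blocked Ean C xs ds \<longleftrightarrow>
     (\<exists>k. 0 < k \<and> k < length xs - 1 \<and>
        ((\<not> is_collider ds k \<and> xs ! k \<in> C) \<or>
         (is_collider ds k \<and> xs ! k \<notin> ancestors Ean C \<union> C)))"

definition sep_paths :: "('b \<Rightarrow> 'b \<Rightarrow> bool) \<Rightarrow> ('b \<Rightarrow> 'b \<Rightarrow> bool) \<Rightarrow> 'b set \<Rightarrow> 'b set \<Rightarrow> 'b set \<Rightarrow> bool" where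
  "sep_paths E Ean A B C \<longleftrightarrow>
     (\<forall>xs ds. is_path E xs ds \<and> hd xs \<in> A \<and> last xs \<in> B \<longrightarrow> blocked Ean C xs ds)"

definition delta_sep_dg :: "('b \<Rightarrow> 'b \<Rightarrow> bool) \<Rightarrow> 'b set \<Rightarrow> 'b set \<Rightarrow> 'b set \<Rightarrow> bool" where
  "delta_sep_dg G A B C = sep_paths (\<lambda>i j. G i j \<and> i \<notin> B) G A B C"

definition delta_sep :: "('a \<Rightarrow> 'a \<Rightarrow> bool) \<Rightarrow> ('a \<Rightarrow> 'a \<Rightarrow> bool) \<Rightarrow> 'a set \<Rightarrow> 'a set \<Rightarrow> 'a set \<Rightarrow> bool" where
  "delta_sep Ed Et A B C = delta_sep_dg (minus_graph Ed Et) A B C"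

definition d_sep :: "('b \<Rightarrow> 'b \<Rightarrow> bool) \<Rightarrow> 'b set \<Rightarrow> 'b set \<Rightarrow> 'b set \<Rightarrow> bool" where
  "d_sep G A B C = sep_paths G G A B C"

text \<open>Node nu_t^i is represented as the pair (i, t).\<close>
definition unr_nodes :: "'a set \<Rightarrow> 'a set \<Rightarrow> nat \<Rightarrow> ('a \<times> nat) set" where
  "unr_nodes V W t' = {(i, t). i \<in> V \<and> t \<le> t'} \<union> {(i, t). i \<in> W \<and> t = 0}"

definition dag_on :: "('b set) \<Rightarrow> ('b \<Rightarrow> 'b \<Rightarrow> bool) \<Rightarrow> bool" where
  "dag_on N G \<longleftrightarrow> (\<forall>x y. G x y \<longrightarrow> x \<in> N \<and> y \<in> N) \<and>
     (\<forall>x. (x, x) \<notin> {(u, v). G u v}\<^sup>+)"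

definition unrolled :: "'a set \<Rightarrow> 'a set \<Rightarrow> nat \<Rightarrow> ('a \<Rightarrow> 'a \<Rightarrow> bool) \<Rightarrow> ('a \<Rightarrow> 'a \<Rightarrow> bool)
    \<Rightarrow> ('a \<times> nat) \<Rightarrow> ('a \<times> nat) \<Rightarrow> bool" where
  "unrolled V W t' Ed Et = (\<lambda>(i, s) (j, t).
     (i, s) \<in> unr_nodes V W t' \<and> (j, t) \<in> unr_nodes V W t' \<and>
     ((s < t \<and> (Ed i j \<or> Et i j)) \<or> (s = t \<and> Et i j)))"

text \<open>D is the rolled version of the DAG G (on the unrolled node set), where G is
time-respecting and satisfies the standing assumption.\<close>
definition is_rolled :: "'a set \<Rightarrow> 'a set \<Rightarrow> nat \<Rightarrow> (('a \<times> nat) \<Rightarrow> ('a \<times> nat) \<Rightarrow> bool)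
    \<Rightarrow> ('a \<Rightarrow> 'a \<Rightarrow> bool) \<Rightarrow> ('a \<Rightarrow> 'a \<Rightarrow> bool) \<Rightarrow> bool" where
  "is_rolled V W t' G Ed Et \<longleftrightarrow>
     (\<forall>i j s t. G (i, s) (j, t) \<longrightarrow> s \<le> t) \<and>
     (\<forall>i j t. G (i, t) (j, t) \<and> j \<in> V \<longrightarrow> (\<exists>s u. s < u \<and> G (i, s) (j, u))) \<and>
     (\<forall>i j. Et i j \<longleftrightarrow> (\<exists>t. G (i, t) (j, t))) \<and>
     (\<forall>i j. (Ed i j \<or> Et i j) \<longleftrightarrow> (\<exists>s t. s \<le> t \<and> G (i, s) (j, t)))"

definition proper_pair :: "'a set \<Rightarrow> 'a set \<Rightarrow> ('a \<Rightarrow> 'a \<Rightarrow> bool) \<Rightarrow> ('a \<Rightarrow> 'a \<Rightarrow> bool) \<Rightarrow> nat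
    \<Rightarrow> (('a \<times> nat) \<Rightarrow> ('a \<times> nat) \<Rightarrow> bool) \<Rightarrow> bool" where
  "proper_pair V W Ed Et t' G \<longleftrightarrow>
     tailed_dg V W Ed Et \<and> dag_on (unr_nodes V W t') G \<and>
     (is_rolled V W t' G Ed Et \<or> G = unrolled V W t' Ed Et)"

definition nu :: "'a set \<Rightarrow> 'a set \<Rightarrow> nat \<Rightarrow> 'a set \<Rightarrow> nat \<Rightarrow> ('a \<times> nat) set" where
  "nu V W t' A t = {(i, s). i \<in> A \<and> s = t \<and> (i, s) \<in> unr_nodes V W t'}"

definition nu_bar :: "'a set \<Rightarrow> 'a set \<Rightarrow> nat \<Rightarrow> 'a set \<Rightarrow> nat \<Rightarrow> ('a \<times> nat) set" where
  "nu_bar V W t' A t = {(i, s). i \<in> A \<and> s \<le> t \<and> (i, s) \<in> unr_nodes V W t'}"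

end

theory Submission imports Defs begin

definition walk :: "('b \<Rightarrow> 'b \<Rightarrow> bool) \<Rightarrow> 'b list \<Rightarrow> bool list \<Rightarrow> bool" where
  "walk E xs ds \<longleftrightarrow> xs \<noteq> [] \<and> length ds = length xs - 1 \<and>
     (\<forall>k < length ds. if ds ! k then E (xs ! k) (xs ! Suc k) else E (xs ! Suc k) (xs ! k))"

definition conn :: "'b set \<Rightarrow> 'b set \<Rightarrow> 'b list \<Rightarrow> bool list \<Rightarrow> bool" where
  "conn K C xs ds \<longleftrightarrow> (\<forall>k. 0 < k \<and> k < length xs - 1 \<longrightarrow>
      (is_collider ds k \<longrightarrow> xs ! k \<in> K) \<and> (\<not> is_collider ds k \<longrightarrow> xs ! k \<notin> C))"

lemma fwd_rtrancl:
  assumes "walk E xs ds" "\<And>u v. E u v \<Longrightarrow> H u v" "i \<le> k" "k < length xs"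
    "\<forall>m. i \<le> m \<and> m < k \<longrightarrow> ds ! m"
  shows "(xs ! i, xs ! k) \<in> {(u, v). H u v}\<^sup>*"
  using assms(3-5)
proof (induction k)
  case 0 thus ?case by simp
next
  case (Suc k)
  show ?case
  proof (cases "i = Suc k")
    case True thus ?thesis by simp
  next
    case False
    then have ik: "i \<le> k" using Suc by simp
    then have 1: "(xs ! i, xs ! k) \<in> {(u, v). H u v}\<^sup>*" using Suc.IH Suc.prems by auto
    have "ds ! k" using Suc.prems ik by auto
    moreover have "k < length ds" using assms(1) Suc.prems unfolding walk_def by auto
    ultimately have "H (xs ! k) (xs ! Suc k)" using assms(1,2) unfolding walk_def by metis
    then have "(xs ! k, xs ! Suc k) \<in> {(u, v). H u v}" by simp
    then show ?thesis by (rule rtrancl.rtrancl_into_rtrancl[OF 1])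
  qed
qed

lemma anc_closed:
  assumes "(v, w) \<in> {(u, v). H u v}\<^sup>*" "w \<in> ancestors H C"
  shows "v \<in> ancestors H C"
proof -
  obtain y where y: "y \<in> C" "(w, y) \<in> {(u, v). H u v}\<^sup>*" using assms(2) unfolding ancestors_def by blast
  have "(v, y) \<in> {(u, v). H u v}\<^sup>*" by (rule rtrancl_trans[OF assms(1) y(2)])
  then show ?thesis using y(1) unfolding ancestors_def by blast
qed

lemma C_sub_anc: "C \<subseteq> ancestors H C"
  unfolding ancestors_def by auto

lemma w2p:
  assumes EH: "\<And>u v. E u v \<Longrightarrow> H u v"
  shows "walk E xs ds \<Longrightarrow> hd xs \<in> A \<Longrightarrow> last xs \<in> B \<Longrightarrow> conn (ancestors H C) C xs ds \<Longrightarrow>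
    \<exists>ys es. is_path E ys es \<and> hd ys \<in> A \<and> last ys \<in> B \<and> \<not> blocked H C ys es"
proof (induction "length xs" arbitrary: xs ds rule: less_induct)
  case less
  show ?case
  proof (cases "distinct xs")
    case True
    then have "is_path E xs ds" using less.prems unfolding is_path_def walk_def by auto
    moreover have "\<not> blocked H C xs ds" using less.prems(4) unfolding conn_def blocked_def by auto
    ultimately show ?thesis using less.prems by blast
  next
    case False
    then obtain i j where ij: "i < j" "j < length xs" "xs ! i = xs ! j"
      by (metis distinct_conv_nth linorder_neqE_nat)
    define n where "n = length xs - 1"
    have lds: "length ds = n" using less.prems(1) unfolding walk_def n_def by auto
    have jn: "j \<le> n" using ij n_def by auto
    define g where "g = (\<lambda>k. if k < i then k else k + (j - i))"
    define L where "L = length xs - (j - i)"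
    define xs' where "xs' = map (\<lambda>k. xs ! g k) [0..<L]"
    define ds' where "ds' = map (\<lambda>k. ds ! g k) [0..<L - 1]"
    have L: "L = n - j + i + 1" using ij n_def L_def by auto
    have lxs': "length xs' = L" and lds': "length ds' = L - 1" using xs'_def ds'_def by auto
    have nxs': "\<And>k. k < L \<Longrightarrow> xs' ! k = xs ! g k" using xs'_def by auto
    have nds': "\<And>k. k < L - 1 \<Longrightarrow> ds' ! k = ds ! g k" using ds'_def by auto
    have gL: "\<And>k. k < L \<Longrightarrow> g k \<le> n" using L g_def ij jn by auto
    have gL1: "\<And>k. k < L - 1 \<Longrightarrow> g k < n" using L g_def ij jn by auto
    have gsuc: "xs ! g (Suc k) = xs ! Suc (g k)" for k
    proof (cases "Suc k = i")
      case True
      then have "g (Suc k) = j" "g k = k" using g_def ij by auto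
      then show ?thesis using True ij(3) by simp
    next
      case False
      then show ?thesis using g_def by auto
    qed
    have walk': "walk E xs' ds'"
      unfolding walk_def
    proof (intro conjI allI impI)
      show "xs' \<noteq> []" using lxs' L by auto
      show "length ds' = length xs' - 1" using lxs' lds' by simp
      fix k assume k: "k < length ds'"
      have "k < n" using k lds' L ij jn by auto
      have "if ds ! g k then E (xs ! g k) (xs ! Suc (g k)) else E (xs ! Suc (g k)) (xs ! g k)"
        using less.prems(1) gL1[of k] k lds' lds unfolding walk_def by auto
      moreover have k1: "k < L - 1" using k lds' by simp
      moreover have "ds' ! k = ds ! g k" using nds'[OF k1] .
      moreover have "xs' ! k = xs ! g k" using nxs'[of k] k1 by simp
      moreover have "xs' ! Suc k = xs ! Suc (g k)" using nxs'[of "Suc k"] k1 gsuc[of k] by simp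
      ultimately show "if ds' ! k then E (xs' ! k) (xs' ! Suc k) else E (xs' ! Suc k) (xs' ! k)"
        by simp
    qed
    have hd': "hd xs' \<in> A"
    proof -
      have "xs' \<noteq> []" using lxs' L by auto
      then have "hd xs' = xs' ! 0" by (simp add: hd_conv_nth)
      also have "\<dots> = xs ! g 0" using nxs' L by simp
      also have "\<dots> = xs ! 0" using g_def ij by auto
      also have "\<dots> = hd xs" using less.prems(1) unfolding walk_def by (simp add: hd_conv_nth)
      finally show ?thesis using less.prems(2) by simp
    qed
    have last': "last xs' \<in> B"
    proof -
      have "xs' \<noteq> []" using lxs' L by auto
      then have "last xs' = xs' ! (L - 1)" using lxs' by (simp add: last_conv_nth)
      also have "\<dots> = xs ! g (L - 1)" using nxs' L by simp
      also have "\<dots> = xs ! n" using g_def ij L jn by auto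
      also have "\<dots> = last xs" using less.prems(1) n_def unfolding walk_def by (simp add: last_conv_nth)
      finally show ?thesis using less.prems(3) by simp
    qed
    have oldc: "\<And>k. 0 < k \<Longrightarrow> k < n \<Longrightarrow> (is_collider ds k \<longrightarrow> xs ! k \<in> ancestors H C) \<and>
        (\<not> is_collider ds k \<longrightarrow> xs ! k \<notin> C)"
      using less.prems(4) n_def unfolding conn_def by auto
    have conn': "conn (ancestors H C) C xs' ds'"
      unfolding conn_def
    proof (intro allI impI)
      fix k assume k: "0 < k \<and> k < length xs' - 1"
      show "(is_collider ds' k \<longrightarrow> xs' ! k \<in> ancestors H C) \<and> (\<not> is_collider ds' k \<longrightarrow> xs' ! k \<notin> C)"
      proof (cases "k = i")
        case False
        have k1: "k < L - 1" "k - 1 < L - 1" using k lxs' by auto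
        have e1: "ds' ! k = ds ! g k" using nds' k1 by blast
        have e2: "ds' ! (k - 1) = ds ! g (k - 1)" using nds' k1 by blast
        have e3: "g (k - 1) = g k - 1" using False k g_def by (cases "k < i") auto
        have "is_collider ds' k = is_collider ds (g k)"
          unfolding is_collider_def using e1 e2 e3 by simp
        moreover have "0 < g k" "g k < n" using k gL1 lxs' g_def by auto
        ultimately show ?thesis using oldc[of "g k"] nxs'[of k] k lxs' by auto
      next
        case True
        have k1: "i < L - 1" "i - 1 < L - 1" using k lxs' True by auto
        have e1: "ds' ! i = ds ! j" using nds'[OF k1(1)] g_def ij by simp
        have e2: "ds' ! (i - 1) = ds ! (i - 1)" using nds'[OF k1(2)] g_def k True by simp
        have ci: "is_collider ds' i = (ds ! (i - 1) \<and> \<not> ds ! j)"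
          unfolding is_collider_def using e1 e2 by simp
        have xi: "xs' ! i = xs ! i" using nxs'[of i] k True lxs' g_def ij by auto
        have i0: "0 < i" "j < n" using k True apply simp using k1(1) L by linarith
        have i1: "i < n" "0 < j" using i0 ij(1) by auto
        have oi: "(is_collider ds i \<longrightarrow> xs ! i \<in> ancestors H C) \<and> (\<not> is_collider ds i \<longrightarrow> xs ! i \<notin> C)"
          by (rule oldc[OF i0(1) i1(1)])
        have oj: "(is_collider ds j \<longrightarrow> xs ! i \<in> ancestors H C) \<and> (\<not> is_collider ds j \<longrightarrow> xs ! i \<notin> C)"
          using oldc[OF i1(2) i0(2)] ij(3) by simp
        show ?thesis
        proof (intro conjI impI)
          assume col: "is_collider ds' k"
          show "xs' ! k \<in> ancestors H C"
          proof (cases "is_collider ds i \<or> is_collider ds j")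
            case True
            then have "xs ! i \<in> ancestors H C" using oi oj by blast
            then show ?thesis using xi \<open>k = i\<close> by simp
          next
            case False
            then have di: "ds ! i" and dj: "\<not> ds ! (j - 1)"
              using col ci \<open>k = i\<close> unfolding is_collider_def by auto
            define k1 where "k1 = (LEAST m. i \<le> m \<and> \<not> ds ! m)"
            have ex: "i \<le> j - 1 \<and> \<not> ds ! (j - 1)" using dj ij by auto
            have k1p: "i \<le> k1 \<and> \<not> ds ! k1" unfolding k1_def by (rule LeastI, rule ex)
            have k1le: "k1 \<le> j - 1" unfolding k1_def by (rule Least_le, rule ex)
            have below: "\<forall>m. i \<le> m \<and> m < k1 \<longrightarrow> ds ! m"
            proof (intro allI impI)
              fix m assume m: "i \<le> m \<and> m < k1"
              then have "\<not> (i \<le> m \<and> \<not> ds ! m)" unfolding k1_def by (intro not_less_Least) simp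
              then show "ds ! m" using m by simp
            qed
            have "k1 \<noteq> i" using k1p di by auto
            then have "ds ! (k1 - 1)" using below k1p by auto
            then have "is_collider ds k1" using k1p unfolding is_collider_def by simp
            moreover have "0 < k1" "k1 < n" using k1p \<open>k1 \<noteq> i\<close> k1le ij i0 by auto
            ultimately have "xs ! k1 \<in> ancestors H C" using oldc by blast
            moreover have kl: "k1 < length xs" using k1le ij by simp
            have "(xs ! i, xs ! k1) \<in> {(u, v). H u v}\<^sup>*"
              by (rule fwd_rtrancl[OF less.prems(1) EH k1p[THEN conjunct1] kl below])
            ultimately have "xs ! i \<in> ancestors H C" by (rule anc_closed[rotated])
            then show ?thesis using xi \<open>k = i\<close> by simp
          qed
        next
          assume ncol: "\<not> is_collider ds' k"
          show "xs' ! k \<notin> C"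
          proof (cases "is_collider ds i")
            case False
            then show ?thesis using oi xi \<open>k = i\<close> by simp
          next
            case True
            show ?thesis
            proof (cases "is_collider ds j")
              case False
              then show ?thesis using oj xi \<open>k = i\<close> by simp
            next
              case True
              then show ?thesis using \<open>is_collider ds i\<close> ncol ci \<open>k = i\<close>
                unfolding is_collider_def by auto
            qed
          qed
        qed
      qed
    qed
    have "length xs' < length xs" using lxs' L_def ij by auto
    then show ?thesis by (rule less.hyps[OF _ walk' hd' last' conn'])
  qed
qed

lemma ext_walk:
  assumes "(c, b) \<in> {(u, v). H u v}\<^sup>*" "b \<in> B"
  shows "walk (\<lambda>i j. H i j \<and> i \<notin> B) xs ds \<Longrightarrow> hd xs \<in> A \<Longrightarrow> last xs = c \<Longrightarrow>
     conn (ancestors H C) C xs ds \<Longrightarrow> (1 < length xs \<longrightarrow> ds ! (length xs - 2)) \<Longrightarrow>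
     c \<notin> ancestors H C \<Longrightarrow>
     \<exists>ys es. walk (\<lambda>i j. H i j \<and> i \<notin> B) ys es \<and> hd ys \<in> A \<and> last ys \<in> B \<and>
        conn (ancestors H C) C ys es"
  using assms(1)
proof (induction arbitrary: xs ds rule: converse_rtrancl_induct)
  case base
  then show ?case using assms(2) by blast
next
  case (step c c')
  show ?case
  proof (cases "c \<in> B")
    case True then show ?thesis using step.prems by blast
  next
    case False
    note cB = False
    have Hcc: "H c c'" using step.hyps by simp
    define xs' where "xs' = xs @ [c']"
    define ds' where "ds' = ds @ [True]"
    have lds: "length ds = length xs - 1" and ne: "xs \<noteq> []"
      using step.prems(1) unfolding walk_def by auto
    have lastc: "xs ! (length xs - 1) = c" using step.prems(3) ne by (simp add: last_conv_nth)
    have w': "walk (\<lambda>i j. H i j \<and> i \<notin> B) xs' ds'"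
      unfolding walk_def
    proof (intro conjI allI impI)
      show "xs' \<noteq> []" using xs'_def by simp
      show "length ds' = length xs' - 1" using xs'_def ds'_def lds ne by simp
      fix k assume k: "k < length ds'"
      show "if ds' ! k then H (xs' ! k) (xs' ! Suc k) \<and> xs' ! k \<notin> B
            else H (xs' ! Suc k) (xs' ! k) \<and> xs' ! Suc k \<notin> B"
      proof (cases "k < length ds")
        case True
        then have "Suc k < length xs" using lds by simp
        then show ?thesis using step.prems(1) True unfolding walk_def xs'_def ds'_def
          by (auto simp: nth_append)
      next
        case False
        then have "k = length xs - 1" using k ds'_def lds by simp
        then show ?thesis using Hcc cB lastc ne unfolding xs'_def ds'_def
          by (auto simp: nth_append lds)
      qed
    qed
    have hd': "hd xs' \<in> A" using step.prems(2) ne xs'_def by simp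
    have last': "last xs' = c'" using xs'_def by simp
    have cC: "c \<notin> C"
    proof
      assume "c \<in> C"
      then have "c \<in> ancestors H C" unfolding ancestors_def by auto
      then show False using step.prems(6) by simp
    qed
    have conn': "conn (ancestors H C) C xs' ds'"
      unfolding conn_def
    proof (intro allI impI)
      fix k assume k: "0 < k \<and> k < length xs' - 1"
      show "(is_collider ds' k \<longrightarrow> xs' ! k \<in> ancestors H C) \<and> (\<not> is_collider ds' k \<longrightarrow> xs' ! k \<notin> C)"
      proof (cases "k < length xs - 1")
        case True
        then have "is_collider ds' k = is_collider ds k" "xs' ! k = xs ! k"
          unfolding is_collider_def ds'_def xs'_def using lds by (auto simp: nth_append)
        moreover have "0 < k \<and> k < length xs - 1" using True k by simp
        moreover have "\<forall>k. 0 < k \<and> k < length xs - 1 \<longrightarrow>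
      (is_collider ds k \<longrightarrow> xs ! k \<in> ancestors H C) \<and> (\<not> is_collider ds k \<longrightarrow> xs ! k \<notin> C)"
          using step.prems(4) unfolding conn_def .
        ultimately show ?thesis by simp
      next
        case False
        have "k < length xs" using k xs'_def by simp
        then have kk: "k = length xs - 1" using False by linarith
        then have "\<not> is_collider ds' k" unfolding is_collider_def ds'_def using lds
          by (simp add: nth_append)
        moreover have "xs' ! k = c" using kk lastc xs'_def ne by (simp add: nth_append)
        ultimately show ?thesis using cC by simp
      qed
    qed
    have le': "1 < length xs' \<longrightarrow> ds' ! (length xs' - 2)"
      using xs'_def ds'_def lds ne by (simp add: nth_append)
    have c'a: "c' \<notin> ancestors H C"
    proof
      assume "c' \<in> ancestors H C"
      moreover have "(c, c') \<in> {(u, v). H u v}\<^sup>*" using Hcc by auto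
      ultimately have "c \<in> ancestors H C" using anc_closed[of c c' H C] by simp
      then show False using step.prems(6) by simp
    qed
    show ?thesis using step.IH[OF w' hd' last' conn' le' c'a] .
  qed
qed

lemma anc_union: "ancestors H (B \<union> C) = ancestors H B \<union> ancestors H C"
  unfolding ancestors_def by blast

lemma fix_walk:
  assumes w: "walk (\<lambda>i j. H i j \<and> i \<notin> B) ys ds" and h: "hd ys \<in> A" and l: "last ys \<in> B"
    and c: "conn (ancestors H (B \<union> C)) C ys ds"
  shows "\<exists>ys es. walk (\<lambda>i j. H i j \<and> i \<notin> B) ys es \<and> hd ys \<in> A \<and> last ys \<in> B \<and>
        conn (ancestors H C) C ys es"
proof (cases "conn (ancestors H C) C ys ds")
  case True then show ?thesis using w h l by blast
next
  case False
  let ?P = "\<lambda>k. 0 < k \<and> k < length ys - 1 \<and> is_collider ds k \<and> ys ! k \<notin> ancestors H C"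
  have ex: "\<exists>k. ?P k" using False c unfolding conn_def by blast
  define k where "k = (LEAST k. ?P k)"
  have Pk: "?P k" unfolding k_def using ex by (rule LeastI_ex)
  have below: "\<not> ?P m" if "m < k" for m unfolding k_def by (rule not_less_Least) (use that k_def in simp)
  have lds: "length ds = length ys - 1" using w unfolding walk_def by auto
  define xs where "xs = take (Suc k) ys"
  define es where "es = take k ds"
  have lxs: "length xs = Suc k" using xs_def Pk by auto
  have w0: "walk (\<lambda>i j. H i j \<and> i \<notin> B) xs es"
    using w Pk lds unfolding walk_def xs_def es_def by auto
  have h0: "hd xs \<in> A" using h xs_def Pk by (cases ys) auto
  have kl: "k < length ys" using Pk by linarith
  have l0: "last xs = ys ! k" unfolding xs_def using kl by (subst take_Suc_conv_app_nth) auto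
  have c0: "conn (ancestors H C) C xs es"
    unfolding conn_def
  proof (intro allI impI)
    fix m assume m: "0 < m \<and> m < length xs - 1"
    then have mk: "m < k" using lxs by simp
    have "is_collider es m = is_collider ds m" "xs ! m = ys ! m"
      unfolding is_collider_def es_def xs_def using mk by auto
    moreover have "m < length ys - 1" using mk Pk by simp
    ultimately show "(is_collider es m \<longrightarrow> xs ! m \<in> ancestors H C) \<and> (\<not> is_collider es m \<longrightarrow> xs ! m \<notin> C)"
      using below[OF mk] c m unfolding conn_def by auto
  qed
  have le0: "1 < length xs \<longrightarrow> es ! (length xs - 2)"
    using Pk lxs unfolding es_def is_collider_def by auto
  have "ys ! k \<in> ancestors H (B \<union> C)" using c Pk unfolding conn_def by blast
  then have "ys ! k \<in> ancestors H B" using Pk anc_union[of H B C] by simp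
  then obtain b where b: "b \<in> B" "(ys ! k, b) \<in> {(u, v). H u v}\<^sup>*"
    unfolding ancestors_def by blast
  show ?thesis using ext_walk[OF b(2) b(1) w0 h0 l0 c0 le0] Pk by blast
qed


lemma time_mono:
  assumes "\<And>x y. G x y \<Longrightarrow> snd x \<le> (snd y :: nat)"
  shows "(x, y) \<in> {(u, v). G u v}\<^sup>* \<Longrightarrow> snd x \<le> snd y"
proof (induction rule: rtrancl_induct)
  case base then show ?case by simp
next
  case (step y z) then show ?case using assms[of y z] by simp
qed

lemma proj_rtrancl:
  assumes "\<And>x y. G x y \<Longrightarrow> H (fst x) (fst y)"
  shows "(x, y) \<in> {(u, v). G u v}\<^sup>* \<Longrightarrow> (fst x, fst y) \<in> {(u, v). H u v}\<^sup>*"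
proof (induction rule: rtrancl_induct)
  case base then show ?case by simp
next
  case (step y z)
  then have "H (fst y) (fst z)" using assms by simp
  then show ?case using step.IH rtrancl.rtrancl_into_rtrancl[of "fst x" "fst y" "{(u, v). H u v}" "fst z"] by simp
qed

lemma main_G:
  fixes G :: "('a \<times> nat) \<Rightarrow> ('a \<times> nat) \<Rightarrow> bool" and H :: "'a \<Rightarrow> 'a \<Rightarrow> bool"
  assumes F1: "\<And>x y. G x y \<Longrightarrow> snd x \<le> snd y"
    and F2: "\<And>x y. G x y \<Longrightarrow> H (fst x) (fst y)"
    and F3: "\<And>x y. G x y \<Longrightarrow> snd x = snd y \<Longrightarrow> fst y \<notin> B"
    and F4: "\<And>x y. G x y \<Longrightarrow> x \<in> N \<and> y \<in> N"
    and S1: "\<And>x. x \<in> S \<Longrightarrow> snd x \<le> t - 1"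
    and S2: "\<And>x. x \<in> N \<Longrightarrow> snd x \<le> t - 1 \<Longrightarrow> fst x \<in> B \<union> C \<Longrightarrow> x \<in> S"
    and S3: "\<And>x. x \<in> S \<Longrightarrow> fst x \<in> B \<union> C"
    and t0: "0 < t" and AB: "A \<inter> B = {}"
    and p: "is_path G xs ds" and h1: "fst (hd xs) \<in> A" and h2: "snd (hd xs) \<le> t - 1"
    and l1: "fst (last xs) \<in> B" and l2: "snd (last xs) = t"
    and nb: "\<not> blocked G S xs ds"
  shows "\<exists>ys es. walk (\<lambda>i j. H i j \<and> i \<notin> B) ys es \<and> hd ys \<in> A \<and> last ys \<in> B \<and>
           conn (ancestors H (B \<union> C)) C ys es"
proof -
  define n where "n = length xs - 1"
  have ne: "xs \<noteq> []" and lds: "length ds = n" and dist: "distinct xs"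
    and edges: "\<And>k. k < n \<Longrightarrow> (if ds ! k then G (xs ! k) (xs ! Suc k) else G (xs ! Suc k) (xs ! k))"
    using p unfolding is_path_def n_def by auto
  have hd0: "hd xs = xs ! 0" using ne by (simp add: hd_conv_nth)
  have lastn: "last xs = xs ! n" using ne n_def by (simp add: last_conv_nth)
  have n1: "0 < n"
  proof (rule ccontr)
    assume "\<not> 0 < n"
    then have "hd xs = last xs" using hd0 lastn by simp
    then show False using h2 l2 t0 by simp
  qed
  have lenxs: "length xs = Suc n" using n_def ne by simp
  have cond: "\<And>k. 0 < k \<Longrightarrow> k < n \<Longrightarrow> (is_collider ds k \<longrightarrow> xs ! k \<in> ancestors G S \<union> S) \<and>
        (\<not> is_collider ds k \<longrightarrow> xs ! k \<notin> S)"
    using nb unfolding blocked_def n_def by auto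
  have anct: "\<And>x. x \<in> ancestors G S \<union> S \<Longrightarrow> snd x \<le> t - 1"
  proof -
    fix x assume "x \<in> ancestors G S \<union> S"
    then show "snd x \<le> t - 1"
    proof
      assume "x \<in> ancestors G S"
      then obtain y where "y \<in> S" "(x, y) \<in> {(u, v). G u v}\<^sup>*" unfolding ancestors_def by blast
      then show ?thesis using time_mono[OF F1] S1 order_trans by metis
    qed (rule S1)
  qed
  have inN: "\<And>k. k \<le> n \<Longrightarrow> xs ! k \<in> N"
  proof -
    fix k assume k: "k \<le> n"
    show "xs ! k \<in> N"
    proof (cases "k < n")
      case True then show ?thesis using edges[of k] F4 by (cases "ds ! k") auto
    next
      case False
      then have "k = Suc (n - 1)" using k n1 by simp
      then show ?thesis using edges[of "n - 1"] F4 n1 by (cases "ds ! (n - 1)") auto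
    qed
  qed
  have tf: "snd (xs ! k) \<le> snd (xs ! Suc k)" if "k < n" "ds ! k" for k
  proof -
    have "G (xs ! k) (xs ! Suc k)" using edges[OF that(1)] that(2) by simp
    then show ?thesis by (rule F1)
  qed
  have tb: "snd (xs ! Suc k) \<le> snd (xs ! k)" if "k < n" "\<not> ds ! k" for k
  proof -
    have "G (xs ! Suc k) (xs ! k)" using edges[OF that(1)] that(2) by simp
    then show ?thesis by (rule F1)
  qed
  have low: "\<And>k. k < n \<Longrightarrow> snd (xs ! k) < t"
  proof (rule ccontr)
    fix k assume k: "k < n" "\<not> snd (xs ! k) < t"
    define k0 where "k0 = (LEAST k. t \<le> snd (xs ! k))"
    have kt: "t \<le> snd (xs ! k)" using k(2) by simp
    have Pk0: "t \<le> snd (xs ! k0)" unfolding k0_def by (rule LeastI[of "\<lambda>k. t \<le> snd (xs ! k)" k, OF kt])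
    have k0k: "k0 \<le> k" unfolding k0_def by (rule Least_le[of "\<lambda>k. t \<le> snd (xs ! k)" k, OF kt])
    have bel: "snd (xs ! m) < t" if "m < k0" for m
    proof -
      have "\<not> t \<le> snd (xs ! m)" unfolding k0_def by (rule not_less_Least) (use that k0_def in simp)
      then show ?thesis by simp
    qed
    have k0p: "0 < k0" using Pk0 h2 hd0 t0 by (cases k0) auto
    have dk0: "ds ! (k0 - 1)"
    proof (rule ccontr)
      assume "\<not> ds ! (k0 - 1)"
      then have "snd (xs ! k0) \<le> snd (xs ! (k0 - 1))" using tb[of "k0 - 1"] k0p k0k k by simp
      then show False using bel[of "k0 - 1"] k0p Pk0 by simp
    qed
    show False
    proof (cases "\<exists>m. k0 \<le> m \<and> m < n \<and> \<not> ds ! m")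
      case True
      define k1 where "k1 = (LEAST m. k0 \<le> m \<and> m < n \<and> \<not> ds ! m)"
      have Pk1: "k0 \<le> k1 \<and> k1 < n \<and> \<not> ds ! k1" unfolding k1_def using True by (rule LeastI_ex)
      have bel1: "ds ! m" if "k0 \<le> m" "m < k1" for m
      proof -
        have "\<not> (k0 \<le> m \<and> m < n \<and> \<not> ds ! m)" unfolding k1_def
          by (rule not_less_Least) (use that k1_def in simp)
        then show ?thesis using that Pk1 by simp
      qed
      have mono: "\<And>d. k0 + d \<le> k1 \<Longrightarrow> t \<le> snd (xs ! (k0 + d))"
      proof -
        fix d show "k0 + d \<le> k1 \<Longrightarrow> t \<le> snd (xs ! (k0 + d))"
        proof (induction d)
          case 0 then show ?case using Pk0 by simp
        next
          case (Suc d)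
          then have "t \<le> snd (xs ! (k0 + d))" by simp
          moreover have "ds ! (k0 + d)" using bel1 Suc.prems by simp
          ultimately show ?case using tf[of "k0 + d"] Suc.prems Pk1 by simp
        qed
      qed
      have tk1: "t \<le> snd (xs ! k1)" using mono[of "k1 - k0"] Pk1 by simp
      have "ds ! (k1 - 1)"
      proof (cases "k1 = k0")
        case True then show ?thesis using dk0 by simp
      next
        case False
        then have "k0 \<le> k1 - 1" "k1 - 1 < k1" using Pk1 k0p by auto
        then show ?thesis by (rule bel1)
      qed
      then have "is_collider ds k1" using Pk1 unfolding is_collider_def by simp
      then have "xs ! k1 \<in> ancestors G S \<union> S" using cond[of k1] Pk1 k0p by simp
      then have "snd (xs ! k1) \<le> t - 1" by (rule anct)
      then show False using tk1 t0 by simp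
    next
      case False
      have mono: "\<And>d. k0 + d \<le> n \<Longrightarrow> t \<le> snd (xs ! (k0 + d))"
      proof -
        fix d show "k0 + d \<le> n \<Longrightarrow> t \<le> snd (xs ! (k0 + d))"
        proof (induction d)
          case 0 then show ?case using Pk0 by simp
        next
          case (Suc d)
          then have "t \<le> snd (xs ! (k0 + d))" by simp
          moreover have "ds ! (k0 + d)" using False Suc.prems by auto
          ultimately show ?case using tf[of "k0 + d"] Suc.prems by simp
        qed
      qed
      have a: "t \<le> snd (xs ! (n - 1))" using mono[of "n - 1 - k0"] k0k k by simp
      have dn: "ds ! (n - 1)" using False k0k k by auto
      then have g: "G (xs ! (n - 1)) (xs ! n)" using edges[of "n - 1"] n1 by simp
      then have "snd (xs ! (n - 1)) \<le> snd (xs ! n)" using F1 by blast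
      then have "snd (xs ! (n - 1)) = snd (xs ! n)" using a l2 lastn by simp
      then have "fst (xs ! n) \<notin> B" using F3 g by blast
      then show False using l1 lastn by simp
    qed
  qed
  have dlast: "ds ! (n - 1)"
  proof (rule ccontr)
    assume "\<not> ds ! (n - 1)"
    then have "snd (xs ! n) \<le> snd (xs ! (n - 1))" using tb[of "n - 1"] n1 by simp
    then show False using low[of "n - 1"] n1 l2 lastn by simp
  qed
  have notB: "\<And>k. 0 < k \<Longrightarrow> k < n \<Longrightarrow> \<not> is_collider ds k \<Longrightarrow> fst (xs ! k) \<notin> B \<union> C"
  proof -
    fix k assume k: "0 < k" "k < n" "\<not> is_collider ds k"
    then have "xs ! k \<notin> S" using cond by blast
    have i1: "xs ! k \<in> N" using inN[of k] k by simp
    have i2: "snd (xs ! k) \<le> t - 1" using low[of k] k by simp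
    show "fst (xs ! k) \<notin> B \<union> C"
    proof
      assume "fst (xs ! k) \<in> B \<union> C"
      then have "xs ! k \<in> S" by (rule S2[OF i1 i2])
      then show False using \<open>xs ! k \<notin> S\<close> by simp
    qed
  qed
  define ys where "ys = map fst xs"
  have nys: "\<And>k. k \<le> n \<Longrightarrow> ys ! k = fst (xs ! k)" using ys_def lenxs by simp
  have w: "walk (\<lambda>i j. H i j \<and> i \<notin> B) ys ds"
    unfolding walk_def
  proof (intro conjI allI impI)
    show "ys \<noteq> []" using ys_def ne by simp
    show "length ds = length ys - 1" using ys_def lds n_def by simp
    fix k assume k: "k < length ds"
    then have kn: "k < n" using lds by simp
    show "if ds ! k then H (ys ! k) (ys ! Suc k) \<and> ys ! k \<notin> B else H (ys ! Suc k) (ys ! k) \<and> ys ! Suc k \<notin> B"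
    proof (cases "ds ! k")
      case True
      have "fst (xs ! k) \<notin> B"
      proof (cases "k = 0")
        case True then show ?thesis using h1 hd0 AB by auto
      next
        case False
        then show ?thesis using notB[of k] kn \<open>ds ! k\<close> unfolding is_collider_def by auto
      qed
      then show ?thesis using True edges[OF kn] F2 nys kn by auto
    next
      case False
      have "Suc k < n"
      proof (rule ccontr)
        assume "\<not> Suc k < n"
        then have "k = n - 1" using kn by simp
        then show False using False dlast by simp
      qed
      then have "fst (xs ! Suc k) \<notin> B" using notB[of "Suc k"] False unfolding is_collider_def by auto
      then show ?thesis using False edges[OF kn] F2 nys kn by auto
    qed
  qed
  have hy: "hd ys \<in> A" using ys_def ne h1 by (simp add: hd_map)
  have ly: "last ys \<in> B" using ys_def ne l1 by (simp add: last_map)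
  have cy: "conn (ancestors H (B \<union> C)) C ys ds"
    unfolding conn_def
  proof (intro allI impI)
    fix k assume k: "0 < k \<and> k < length ys - 1"
    then have kn: "0 < k" "k < n" using ys_def n_def by auto
    show "(is_collider ds k \<longrightarrow> ys ! k \<in> ancestors H (B \<union> C)) \<and> (\<not> is_collider ds k \<longrightarrow> ys ! k \<notin> C)"
    proof (intro conjI impI)
      assume col: "is_collider ds k"
      then have "xs ! k \<in> ancestors G S \<union> S" using cond kn by blast
      then have "xs ! k \<in> ancestors G S" using C_sub_anc[of S G] by auto
      then obtain y where y: "y \<in> S" "(xs ! k, y) \<in> {(u, v). G u v}\<^sup>*" unfolding ancestors_def by blast
      have pr: "(fst (xs ! k), fst y) \<in> {(u, v). H u v}\<^sup>*"
        apply (rule proj_rtrancl[where G=G and H=H])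
         apply (rule F2, assumption)
        apply (rule y(2))
        done
      have fy: "fst y \<in> B \<union> C" by (rule S3[OF y(1)])
      have yk: "ys ! k = fst (xs ! k)" using nys[of k] kn by simp
      show "ys ! k \<in> ancestors H (B \<union> C)" unfolding ancestors_def yk using pr fy by blast
    next
      assume nc: "\<not> is_collider ds k"
      have "fst (xs ! k) \<notin> B \<union> C" by (rule notB[OF kn(1) kn(2) nc])
      then show "ys ! k \<notin> C" using nys[of k] kn by simp
    qed
  qed
  show ?thesis using w hy ly cy by blast
qed


theorem corollary2:
  fixes V W A B C :: "'a set" and Ed Et :: "'a \<Rightarrow> 'a \<Rightarrow> bool"
    and G :: "('a \<times> nat) \<Rightarrow> ('a \<times> nat) \<Rightarrow> bool" and t' :: nat
  assumes "proper_pair V W Ed Et t' G"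
    and "A \<subseteq> V \<union> W" and "C \<subseteq> V \<union> W" and "B \<subseteq> V"
    and "A \<inter> B = {}" and "A \<inter> C = {}" and "B \<inter> C = {}"
    and "\<forall>i. \<forall>j\<in>B. \<not> Et i j"
    and "delta_sep Ed Et A B C"
  shows "\<forall>t. 0 < t \<and> t \<le> t' \<longrightarrow>
           d_sep G (nu_bar V W t' A (t - 1)) (nu V W t' B t) (nu_bar V W t' (B \<union> C) (t - 1))"
proof (intro allI impI)
  fix t assume t: "0 < t \<and> t \<le> t'"
  let ?H = "minus_graph Ed Et"
  let ?N = "unr_nodes V W t'"
  let ?S = "nu_bar V W t' (B \<union> C) (t - 1)"
  have pp: "dag_on ?N G" "is_rolled V W t' G Ed Et \<or> G = unrolled V W t' Ed Et"
    using assms(1) unfolding proper_pair_def by auto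
  have F1: "\<And>x y. G x y \<Longrightarrow> snd x \<le> snd y"
  proof -
    fix x y assume g: "G x y"
    obtain i s j u where xy: "x = (i, s)" "y = (j, u)" by fastforce
    show "snd x \<le> snd y" using pp(2)
    proof
      assume "is_rolled V W t' G Ed Et" then show ?thesis using g xy unfolding is_rolled_def by auto
    next
      assume "G = unrolled V W t' Ed Et" then show ?thesis using g xy unfolding unrolled_def by auto
    qed
  qed
  have F2: "\<And>x y. G x y \<Longrightarrow> ?H (fst x) (fst y)"
  proof -
    fix x y assume g: "G x y"
    obtain i s j u where xy: "x = (i, s)" "y = (j, u)" by fastforce
    show "?H (fst x) (fst y)" using pp(2)
    proof
      assume r: "is_rolled V W t' G Ed Et"
      then have su: "s \<le> u" using g xy unfolding is_rolled_def by auto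
      have r4: "\<forall>i j. (Ed i j \<or> Et i j) \<longleftrightarrow> (\<exists>s t. s \<le> t \<and> G (i, s) (j, t))"
        using r unfolding is_rolled_def by blast
      have "Ed i j \<or> Et i j" using r4 g xy su by blast
      then show ?thesis using xy unfolding minus_graph_def by simp
    next
      assume "G = unrolled V W t' Ed Et" then show ?thesis using g xy
        unfolding unrolled_def minus_graph_def by auto
    qed
  qed
  have F3: "\<And>x y. G x y \<Longrightarrow> snd x = snd y \<Longrightarrow> fst y \<notin> B"
  proof -
    fix x y assume g: "G x y" and e: "snd x = snd y"
    obtain i s j u where xy: "x = (i, s)" "y = (j, u)" by fastforce
    have "Et i j" using pp(2)
    proof
      assume r: "is_rolled V W t' G Ed Et"
      then show ?thesis using g xy e unfolding is_rolled_def by auto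
    next
      assume "G = unrolled V W t' Ed Et" then show ?thesis using g xy e
        unfolding unrolled_def by auto
    qed
    then show "fst y \<notin> B" using assms(8) xy by auto
  qed
  have F4: "\<And>x y. G x y \<Longrightarrow> x \<in> ?N \<and> y \<in> ?N" using pp(1) unfolding dag_on_def by blast
  have S1: "\<And>x. x \<in> ?S \<Longrightarrow> snd x \<le> t - 1" unfolding nu_bar_def by auto
  have S2: "\<And>x. x \<in> ?N \<Longrightarrow> snd x \<le> t - 1 \<Longrightarrow> fst x \<in> B \<union> C \<Longrightarrow> x \<in> ?S"
    unfolding nu_bar_def by auto
  have S3: "\<And>x. x \<in> ?S \<Longrightarrow> fst x \<in> B \<union> C" unfolding nu_bar_def by auto
  show "d_sep G (nu_bar V W t' A (t - 1)) (nu V W t' B t) ?S"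
    unfolding d_sep_def sep_paths_def
  proof (intro allI impI, rule ccontr)
    fix xs ds
    assume a: "is_path G xs ds \<and> hd xs \<in> nu_bar V W t' A (t - 1) \<and> last xs \<in> nu V W t' B t"
      and nb: "\<not> blocked G ?S xs ds"
    have t0: "0 < t" using t by simp
    have p: "is_path G xs ds" using a by simp
    have h: "fst (hd xs) \<in> A" "snd (hd xs) \<le> t - 1" using a unfolding nu_bar_def by auto
    have l: "fst (last xs) \<in> B" "snd (last xs) = t" using a unfolding nu_def by auto
    have "\<exists>ys es. walk (\<lambda>i j. ?H i j \<and> i \<notin> B) ys es \<and> hd ys \<in> A \<and> last ys \<in> B \<and>
        conn (ancestors ?H (B \<union> C)) C ys es"
      by (rule main_G[where G=G and H="?H" and N="?N" and S="?S" and t=t and C=C and A=A and B=B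
            and xs=xs and ds=ds], (fact F1 F2 F3 F4 S1 S2 S3 t0 assms(5) p h l nb)+)
    then obtain ys es where y1: "walk (\<lambda>i j. ?H i j \<and> i \<notin> B) ys es" and y2: "hd ys \<in> A"
        and y3: "last ys \<in> B" and y4: "conn (ancestors ?H (B \<union> C)) C ys es" by blast
    obtain ys' es' where y1': "walk (\<lambda>i j. ?H i j \<and> i \<notin> B) ys' es'" and y2': "hd ys' \<in> A"
        and y3': "last ys' \<in> B" and y4': "conn (ancestors ?H C) C ys' es'"
      using fix_walk[OF y1 y2 y3 y4] by blast
    have EH: "\<And>u v. ?H u v \<and> u \<notin> B \<Longrightarrow> ?H u v" by simp
    obtain zs fs where z: "is_path (\<lambda>i j. ?H i j \<and> i \<notin> B) zs fs" "hd zs \<in> A" "last zs \<in> B"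
        "\<not> blocked ?H C zs fs"
      using w2p[OF EH y1' y2' y3' y4'] by blast
    have sp: "sep_paths (\<lambda>i j. ?H i j \<and> i \<notin> B) ?H A B C"
      using assms(9) unfolding delta_sep_def delta_sep_dg_def .
    have "blocked ?H C zs fs"
      using sp[unfolded sep_paths_def, rule_format, of zs fs] z(1,2,3) by simp
    then show False using z(4) by simp
  qed
qed

end
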